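(* Let $\Gamma\subset\mathbb{R}^2$ be a simple closed curve such that every set of $6$ points of $\Gamma$ is in c.s.c. position. Let $a\in\Gamma$ be a smooth point of $\Gamma$ with tangent line $\ell$, and let $b,c,d\in\Gamma$ be points such that $abcd$ is a non-degenerate parallelogram (with vertices in this cyclic order, so $c$ is opposite to $a$) whose sides are not parallel to $\ell$. Then the line through $c$ parallel to $\ell$ is a supporting line of $\Gamma$.
   Context: A set of points in $\mathbb{R}^2$ is in c.s.c. position if it is contained in the boundary of a centrally symmetric convex body. Under the hypothesis, $\Gamma$ is the boundary of a convex body, so at every point it has two one-sided tangent lines (the best linear approximations of $\Gamma$ at that point in the clockwise and counter-clockwise directions); a point is smooth if these coincide, and the common line is the tangent line there (equivalently, there is a unique supporting line of $\Gamma$ through that point). A supporting line of $\Gamma$ is a line meeting $\Gamma$ such that $\Gamma$ lies in one of the closed half-planes it determines. *)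

theory Defs
  imports "HOL-Analysis.Analysis"
begin

type_synonym pt = "real^2"

definition simple_closed_curve :: "pt set \<Rightarrow> bool" where
  "simple_closed_curve \<Gamma> \<longleftrightarrow>
     (\<exists>g. simple_path g \<and> pathfinish g = pathstart g \<and> path_image g = \<Gamma>)"

definition convex_body :: "pt set \<Rightarrow> bool" where
  "convex_body K \<longleftrightarrow> compact K \<and> convex K \<and> interior K \<noteq> {}"

definition centrally_symmetric :: "pt set \<Rightarrow> bool" where
  "centrally_symmetric K \<longleftrightarrow> (\<exists>p. \<forall>x\<in>K. 2 *\<^sub>R p - x \<in> K)"

definition csc_position :: "pt set \<Rightarrow> bool" where
  "csc_position S \<longleftrightarrow> (\<exists>K. convex_body K \<and> centrally_symmetric K \<and> S \<subseteq> frontier K)"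

definition is_line :: "pt set \<Rightarrow> bool" where
  "is_line L \<longleftrightarrow> (\<exists>u t. u \<noteq> 0 \<and> L = {x. inner u x = t})"

definition supporting_line :: "pt set \<Rightarrow> pt set \<Rightarrow> bool" where
  "supporting_line \<Gamma> L \<longleftrightarrow>
     (\<exists>u t. u \<noteq> 0 \<and> L = {x. inner u x = t} \<and> L \<inter> \<Gamma> \<noteq> {} \<and>
        ((\<forall>x\<in>\<Gamma>. inner u x \<le> t) \<or> (\<forall>x\<in>\<Gamma>. inner u x \<ge> t)))"

definition smooth_point_tangent :: "pt set \<Rightarrow> pt \<Rightarrow> pt set \<Rightarrow> bool" where
  "smooth_point_tangent \<Gamma> a L \<longleftrightarrow>
     a \<in> \<Gamma> \<and> a \<in> L \<and> supporting_line \<Gamma> L \<and>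
     (\<forall>L'. supporting_line \<Gamma> L' \<and> a \<in> L' \<longrightarrow> L' = L)"

end

theory Submission
  imports Defs
begin

lemma arithA:
  fixes al be lx mx ly my Pa Qa :: real
  assumes "al \<le> 0" "be \<le> 0" "lx > 1" "ly > 0" "my*(lx-1) + (1-mx)*ly < 0"
    "Pa \<noteq> 0 \<or> Qa \<noteq> 0" "Pa \<le> 0" "Qa \<le> 0"
    "(1-lx)*Pa + (1-mx)*Qa + (al*Pa + be*Qa) \<le> 0" "ly*Pa + my*Qa \<le> 0"
  shows False
proof -
  have "al*Pa \<ge> 0" "be*Qa \<ge> 0" using assms by (auto simp: mult_nonpos_nonpos)
  then have X: "(1-lx)*Pa + (1-mx)*Qa \<le> 0" using assms(9) by linarith
  show False
  proof (cases "Qa = 0")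
    case True
    then have "Pa < 0" using assms by auto
    then have "(1-lx)*Pa > 0" using assms(3) by (simp add: mult_neg_neg)
    then show False using X True by simp
  next
    case False
    then have Q: "Qa < 0" using assms by auto
    have "ly*((1-lx)*Pa + (1-mx)*Qa) \<le> 0" using X assms(4) by (simp add: mult_nonneg_nonpos)
    moreover have "(lx-1)*(ly*Pa + my*Qa) \<le> 0" using assms(3,10) by (simp add: mult_nonneg_nonpos)
    ultimately have "(my*(lx-1) + (1-mx)*ly) * Qa \<le> 0" by (simp add: algebra_simps)
    moreover have "(my*(lx-1) + (1-mx)*ly) * Qa > 0" using Q assms(5) by (simp add: mult_neg_neg)
    ultimately show False by simp
  qed
qed

lemma core_arith:
  fixes al be lx mx ly my Pa Qa Pb Qb Pc Qc Pd Qd :: real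
  assumes h1: "lx > 1" and h2: "ly > 0" and h3: "my < 0" and h4: "my*(lx-1) + (1-mx)*ly < 0"
  and na: "Pa \<noteq> 0 \<or> Qa \<noteq> 0" and nb: "Pb \<noteq> 0 \<or> Qb \<noteq> 0"
  and nc: "Pc \<noteq> 0 \<or> Qc \<noteq> 0" and nd: "Pd \<noteq> 0 \<or> Qd \<noteq> 0"
  and a1: "Pa \<le> 0" and a2: "Qa \<le> 0" and a3: "al*Pa + be*Qa \<le> 0"
  and a4: "(1-lx)*Pa + (1-mx)*Qa + (al*Pa + be*Qa) \<le> 0" and a5: "ly*Pa + my*Qa \<le> 0"
  and b1: "Pb \<ge> 0" and b2: "Qb \<le> 0" and b3: "al*Pb + be*Qb \<le> 0"
  and c1: "Qc \<ge> 0" and c2: "Pc \<ge> 0" and c3: "al*Pc + be*Qc \<le> 0"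
  and c4: "(lx-1)*Pc + (mx-1)*Qc \<le> 0" and c5: "-(ly*Pc) - my*Qc + (al*Pc + be*Qc) \<le> 0"
  and d1: "Qd \<ge> 0" and d2: "Pd \<le> 0" and d3: "al*Pd + be*Qd \<le> 0"
  shows False
proof -
  consider "al > 0" | "al = 0" | "al < 0" by linarith
  then show False
  proof cases
    case 1
    consider "be > 0" | "be = 0" | "be < 0" by linarith
    then show False
    proof cases
      case 1
      have "al*Pc \<ge> 0" "be*Qc \<ge> 0" using \<open>al>0\<close> 1 c1 c2 by auto
      then have "al*Pc = 0 \<and> be*Qc = 0" using c3 by linarith
      then show False using nc \<open>al>0\<close> 1 by auto
    next
      case 2
      have "al*Pc \<ge> 0" using \<open>al>0\<close> c2 by auto
      then have "Pc = 0" using c2 c3 2 \<open>al>0\<close> by (simp add: mult_le_0_iff)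
      then have "Qc > 0" using nc c1 by auto
      then have "my*Qc < 0" using h3 by (simp add: mult_neg_pos)
      then show False using c5 \<open>Pc = 0\<close> 2 by simp
    next
      case 3
      have "al*Pb \<ge> 0" "be*Qb \<ge> 0" using \<open>al>0\<close> 3 b1 b2 by (auto simp: mult_nonpos_nonpos)
      then have "al*Pb = 0 \<and> be*Qb = 0" using b3 by linarith
      then show False using nb \<open>al>0\<close> 3 by auto
    qed
  next
    case 2
    consider "be > 0" | "be \<le> 0" by linarith
    then show False
    proof cases
      case 1
      have "Qc = 0" using c3 2 1 c1 by (simp add: mult_le_0_iff)
      then have "Pc > 0" using nc c2 by auto
      then show False using c4 \<open>Qc = 0\<close> h1 by (simp add: mult_le_0_iff)
    next
      case 2
      have "al \<le> 0" using \<open>al = 0\<close> by simp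
      show False using \<open>al \<le> 0\<close> 2 h1 h2 h4 na a1 a2 a4 a5 by (rule arithA)
    qed
  next
    case 3
    consider "be > 0" | "be \<le> 0" by linarith
    then show False
    proof cases
      case 1
      have "al*Pd \<ge> 0" "be*Qd \<ge> 0" using \<open>al<0\<close> 1 d1 d2 by (auto simp: mult_nonpos_nonpos)
      then have "al*Pd = 0 \<and> be*Qd = 0" using d3 by linarith
      then show False using nd \<open>al<0\<close> 1 by auto
    next
      case 2
      have "al \<le> 0" using \<open>al < 0\<close> by simp
      show False using \<open>al \<le> 0\<close> 2 h1 h2 h4 na a1 a2 a4 a5 by (rule arithA)
    qed
  qed
qed

lemma frontier_support:
  assumes "convex_body K" "x \<in> frontier K"
  shows "\<exists>v. v \<noteq> 0 \<and> (\<forall>k\<in>K. inner v k \<le> inner v x)"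
proof -
  have cv: "convex K" and ne: "interior K \<noteq> {}"
    using assms(1) unfolding convex_body_def by auto
  have "x \<in> closure K" "x \<notin> interior K" using assms(2) by (auto simp: frontier_def)
  moreover have "rel_interior K = interior K" using rel_interior_nonempty_interior ne by blast
  ultimately obtain w where "w \<noteq> 0" "\<And>y. y \<in> closure K \<Longrightarrow> w \<bullet> x \<le> w \<bullet> y"
    using supporting_hyperplane_relative_frontier[OF cv] by metis
  then show ?thesis using closure_subset
    by (intro exI[of _ "-w"]) auto
qed

lemma det_nz:
  fixes e f :: "real^2"
  assumes "\<not> collinear {0, e, f}"
  shows "e$1 * f$2 - e$2 * f$1 \<noteq> 0"
proof
  assume D: "e$1 * f$2 - e$2 * f$1 = 0"
  have "e = 0 \<or> f = 0 \<or> (\<exists>c. f = c *\<^sub>R e)"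
  proof (cases "e$1 = 0")
    case True
    show ?thesis
    proof (cases "e$2 = 0")
      case True with \<open>e$1=0\<close> have "e = 0" by (simp add: vec_eq_iff forall_2)
      then show ?thesis by simp
    next
      case False
      have "f = (f$2/e$2) *\<^sub>R e" using D True False by (simp add: vec_eq_iff forall_2 field_simps)
      then show ?thesis by blast
    qed
  next
    case False
    have "f = (f$1/e$1) *\<^sub>R e" using D False by (simp add: vec_eq_iff forall_2 field_simps)
    then show ?thesis by blast
  qed
  then show False using assms collinear_lemma by blast
qed

lemma dual_basis:
  fixes e f :: "real^2"
  assumes "\<not> collinear {0, e, f}"
  obtains es fs where "es \<bullet> e = 1" "es \<bullet> f = 0" "fs \<bullet> e = 0" "fs \<bullet> f = 1"
    "\<And>w. w = (es \<bullet> w) *\<^sub>R e + (fs \<bullet> w) *\<^sub>R f"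
proof -
  define D where "D = e$1 * f$2 - e$2 * f$1"
  have D: "D \<noteq> 0" using det_nz[OF assms] D_def by simp
  have Deq: "e$1 * f$2 - e$2 * f$1 = D" using D_def by simp
  have Deq': "e$1 * f$2 = D + e$2 * f$1" using D_def by simp
  define es :: "real^2" where "es = vector [f$2/D, -f$1/D]"
  define fs :: "real^2" where "fs = vector [-e$2/D, e$1/D]"
  show ?thesis
  proof
    show "es \<bullet> e = 1"
      using D Deq unfolding es_def by (simp add: inner_vec_def sum_2 field_simps; simp add: algebra_simps)
    show "es \<bullet> f = 0"
      using D Deq unfolding es_def by (simp add: inner_vec_def sum_2 field_simps; simp add: algebra_simps)
    show "fs \<bullet> e = 0"
      using D Deq unfolding fs_def by (simp add: inner_vec_def sum_2 field_simps; simp add: algebra_simps)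
    show "fs \<bullet> f = 1"
      using D Deq unfolding fs_def by (simp add: inner_vec_def sum_2 field_simps; simp add: algebra_simps)
    fix w :: "real^2"
    have 1: "es \<bullet> w = (f$2*w$1 - f$1*w$2)/D" unfolding es_def
      by (simp add: inner_vec_def sum_2 diff_divide_distrib)
    have 2: "fs \<bullet> w = (e$1*w$2 - e$2*w$1)/D" unfolding fs_def
      by (simp add: inner_vec_def sum_2 diff_divide_distrib)
    have c1': "(f$2*w$1 - f$1*w$2) * e$1 + (e$1*w$2 - e$2*w$1) * f$1 = D * w$1"
      unfolding Deq[symmetric] by (simp add: algebra_simps)
    have c1: "w$1 = (f$2*w$1 - f$1*w$2)/D * e$1 + (e$1*w$2 - e$2*w$1)/D * f$1"
    proof -
      have "w$1 = ((f$2*w$1 - f$1*w$2) * e$1 + (e$1*w$2 - e$2*w$1) * f$1)/D" using c1' D by simp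
      then show ?thesis by (simp add: add_divide_distrib)
    qed
    have c2': "(f$2*w$1 - f$1*w$2) * e$2 + (e$1*w$2 - e$2*w$1) * f$2 = D * w$2"
      unfolding Deq[symmetric] by (simp add: algebra_simps)
    have c2: "w$2 = (f$2*w$1 - f$1*w$2)/D * e$2 + (e$1*w$2 - e$2*w$1)/D * f$2"
    proof -
      have "w$2 = ((f$2*w$1 - f$1*w$2) * e$2 + (e$1*w$2 - e$2*w$1) * f$2)/D" using c2' D by simp
      then show ?thesis by (simp add: add_divide_distrib)
    qed
    show "w = (es \<bullet> w) *\<^sub>R e + (fs \<bullet> w) *\<^sub>R f"
      unfolding 1 2 using c1 c2 by (simp add: vec_eq_iff forall_2)
  qed
qed

lemma sup_ineq:
  fixes v q k w es fs e f :: "real^2"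
  assumes "\<forall>k\<in>K. v \<bullet> k \<le> v \<bullet> q" "k \<in> K" "k - q = w"
    and "\<And>w. v \<bullet> w = (es \<bullet> w) * (v \<bullet> e) + (fs \<bullet> w) * (v \<bullet> f)"
  shows "(es \<bullet> w) * (v \<bullet> e) + (fs \<bullet> w) * (v \<bullet> f) \<le> 0"
proof -
  have "v \<bullet> (k - q) \<le> 0" using assms(1,2) by (simp add: inner_diff_right)
  then show ?thesis using assms(3,4) by metis
qed

lemma sup_ineq2:
  fixes v q k w es fs e f :: "real^2"
  assumes "\<forall>k\<in>K. v \<bullet> k \<le> v \<bullet> q" "k \<in> K" "k - q = w" "es \<bullet> w = A" "fs \<bullet> w = B"
    and "\<And>w. v \<bullet> w = (es \<bullet> w) * (v \<bullet> e) + (fs \<bullet> w) * (v \<bullet> f)"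
  shows "A * (v \<bullet> e) + B * (v \<bullet> f) \<le> 0"
  using sup_ineq[OF assms(1,2,3,6)] assms(4,5) by simp

lemma nz_coord:
  fixes v es fs e f :: "real^2"
  assumes "v \<noteq> 0" "\<And>w. v \<bullet> w = (es \<bullet> w) * (v \<bullet> e) + (fs \<bullet> w) * (v \<bullet> f)"
  shows "v \<bullet> e \<noteq> 0 \<or> v \<bullet> f \<noteq> 0"
proof (rule ccontr)
  assume "\<not> ?thesis"
  then have "v \<bullet> v = 0" using assms(2)[of v] by simp
  then show False using assms(1) by simp
qed

lemma core_geom:
  fixes \<Gamma> :: "pt set" and a b c d x0 u es fs :: pt and t :: real and l :: "pt set"
  assumes csc: "\<forall>S. S \<subseteq> \<Gamma> \<and> finite S \<and> card S = 6 \<longrightarrow> csc_position S"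
    and smooth: "\<And>n. n \<noteq> 0 \<Longrightarrow> (\<forall>x\<in>\<Gamma>. n \<bullet> x \<le> n \<bullet> a) \<Longrightarrow> {x. n \<bullet> x = n \<bullet> a} = l"
    and ldef: "l = {x. u \<bullet> x = t}" and ua: "u \<bullet> a = t" and below: "\<forall>x\<in>\<Gamma>. u \<bullet> x \<le> t"
    and inG: "a \<in> \<Gamma>" "b \<in> \<Gamma>" "c \<in> \<Gamma>" "d \<in> \<Gamma>" "x0 \<in> \<Gamma>"
    and par: "a + c = b + d"
    and ub: "u \<bullet> (b - a) < 0" and ud: "u \<bullet> (d - a) < 0"
    and es1: "es \<bullet> (b - a) = 1" and es2: "es \<bullet> (d - a) = 0"
    and fs1: "fs \<bullet> (b - a) = 0" and fs2: "fs \<bullet> (d - a) = 1"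
    and dec: "\<And>w. w = (es \<bullet> w) *\<^sub>R (b - a) + (fs \<bullet> w) *\<^sub>R (d - a)"
    and lx: "es \<bullet> (x0 - a) > 1" and x0c: "u \<bullet> x0 < u \<bullet> c"
  shows False
proof -
  define e where "e = b - a"
  define f where "f = d - a"
  have expand: "v \<bullet> w = (es \<bullet> w) * (v \<bullet> e) + (fs \<bullet> w) * (v \<bullet> f)" for v w
  proof -
    have "v \<bullet> w = v \<bullet> ((es \<bullet> w) *\<^sub>R e + (fs \<bullet> w) *\<^sub>R f)" using dec e_def f_def by metis
    then show ?thesis by (simp add: inner_add_right)
  qed
  have ca: "c - a = e + f" using par unfolding e_def f_def by (simp add: algebra_simps)
  define E where "E = - (u \<bullet> e)"
  define F where "F = - (u \<bullet> f)"
  have E: "E > 0" and F: "F > 0" using ub ud e_def f_def E_def F_def by auto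
  define lx where "lx = es \<bullet> (x0 - a)"
  define mx where "mx = fs \<bullet> (x0 - a)"
  have "u \<bullet> (x0 - a) = lx * (u \<bullet> e) + mx * (u \<bullet> f)" using expand[of u "x0 - a"] lx_def mx_def by simp
  moreover have "u \<bullet> (c - a) = u \<bullet> e + u \<bullet> f" using ca by (simp add: inner_add_right)
  moreover have "u \<bullet> (x0 - a) < u \<bullet> (c - a)" using x0c by (simp add: inner_diff_right)
  ultimately have key: "lx * E + mx * F > E + F" unfolding E_def F_def by (simp add: algebra_simps)
  define G where "G = lx - 1"
  define H where "H = 1 - mx"
  have G: "G > 0" using lx lx_def G_def by simp
  have GH: "H * F < E * G" using key unfolding G_def H_def by (simp add: algebra_simps)
  have HG: "H / G < E / F" using GH G F by (simp add: field_simps)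
  define mm where "mm = max 0 (H/G)"
  define q where "q = E / F"
  define k where "k = mm/2 + q/2"
  have EF: "E / F > 0" using E F by simp
  have k0: "k > 0" and kH: "k > H / G" and kE: "k < E / F"
  proof -
    have m: "0 \<le> mm" "H/G \<le> mm" "mm < q" using HG EF unfolding mm_def q_def by auto
    show "k > 0" unfolding k_def using m by linarith
    show "k > H / G" unfolding k_def using m by linarith
    show "k < E / F" unfolding k_def using m q_def by linarith
  qed
  have kG: "H < k * G" using kH G by (simp add: field_simps)
  have kF: "k * F < E" using kE F by (simp add: field_simps)
  have ese: "es \<bullet> e = 1" "es \<bullet> f = 0" "fs \<bullet> e = 0" "fs \<bullet> f = 1"
    using es1 es2 fs1 fs2 e_def f_def by auto
  define n where "n = - (k *\<^sub>R es) - fs"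
  have ne: "n \<bullet> e = - k" and nf: "n \<bullet> f = -1"
    unfolding n_def using ese by (auto simp: inner_diff_left inner_scaleR_left)
  have n0: "n \<noteq> 0" using nf by auto
  have "\<exists>y\<in>\<Gamma>. n \<bullet> y > n \<bullet> a"
  proof (rule ccontr)
    assume "\<not> (\<exists>y\<in>\<Gamma>. n \<bullet> y > n \<bullet> a)"
    then have "\<forall>x\<in>\<Gamma>. n \<bullet> x \<le> n \<bullet> a" by auto
    then have Leq: "{x. n \<bullet> x = n \<bullet> a} = l" using smooth n0 by blast
    define w where "w = a + F *\<^sub>R e - E *\<^sub>R f"
    have "u \<bullet> w = t" unfolding w_def E_def F_def using ua
      by (simp add: inner_add_right inner_diff_right)
    then have "w \<in> l" using ldef by simp
    then have "n \<bullet> w = n \<bullet> a" using Leq by auto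
    moreover have "n \<bullet> w = n \<bullet> a + F * (- k) - E * (-1)" unfolding w_def
      using ne nf by (simp add: inner_add_right inner_diff_right)
    ultimately show False using kF by (simp add: algebra_simps)
  qed
  then obtain y where yG: "y \<in> \<Gamma>" and ny: "n \<bullet> y > n \<bullet> a" by blast
  define ly where "ly = es \<bullet> (y - a)"
  define my where "my = fs \<bullet> (y - a)"
  have "n \<bullet> (y - a) = ly * (- k) + my * (-1)" using expand[of n "y - a"] ne nf ly_def my_def by simp
  then have y1: "my < - (k * ly)" using ny by (simp add: inner_diff_right mult.commute)
  have "u \<bullet> (y - a) = ly * (u \<bullet> e) + my * (u \<bullet> f)" using expand[of u "y - a"] ly_def my_def by simp
  moreover have "u \<bullet> (y - a) \<le> 0" using below yG ua by (simp add: inner_diff_right)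
  ultimately have y2: "ly * E + my * F \<ge> 0" unfolding E_def F_def by (simp add: algebra_simps)
  have "F * my < F * (- (k * ly))" using y1 F by (rule mult_strict_left_mono)
  then have "(E - F * k) * ly > 0" using y2 by (simp add: algebra_simps)
  then have lyp: "ly > 0" using kF by (simp add: zero_less_mult_iff mult.commute)
  have "k * ly > 0" using k0 lyp by simp
  then have myn: "my < 0" using y1 by simp
  have "G * my < G * (- (k * ly))" using y1 G by (rule mult_strict_left_mono)
  moreover have "ly * H < ly * (k * G)" using kG lyp by (rule mult_strict_left_mono)
  ultimately have y3: "my * (lx - 1) + (1 - mx) * ly < 0" unfolding G_def[symmetric] H_def[symmetric]
    by (simp add: algebra_simps)
  define cA where "cA = c - a"
  define xA where "xA = x0 - a"
  define yA where "yA = y - a"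
  have cc: "es \<bullet> cA = 1" "fs \<bullet> cA = 1" using ca ese cA_def by (auto simp: inner_add_right)
  have cx: "es \<bullet> xA = lx" "fs \<bullet> xA = mx" using lx_def mx_def xA_def by auto
  have cy: "es \<bullet> yA = ly" "fs \<bullet> yA = my" using ly_def my_def yA_def by auto
  have neq: "p \<noteq> q" if "es \<bullet> (p - a) \<noteq> es \<bullet> (q - a) \<or> fs \<bullet> (p - a) \<noteq> fs \<bullet> (q - a)" for p q
    using that by auto
  have lx1: "lx > 1" using lx lx_def by simp
  have "x0 \<noteq> y"
  proof
    assume "x0 = y"
    then have "ly = lx" "my = mx" using lx_def mx_def ly_def my_def by auto
    then show False using y3 lx1 myn by (simp add: algebra_simps)
  qed
  moreover have F1: "es \<bullet> (c - a) = 1" "fs \<bullet> (c - a) = 1" "es \<bullet> (x0 - a) = lx" "fs \<bullet> (x0 - a) = mx"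
    "es \<bullet> (y - a) = ly" "fs \<bullet> (y - a) = my" using cc cx cy cA_def xA_def yA_def by auto
  moreover have "a \<noteq> b" by (rule neq) (use F1 es1 es2 fs1 fs2 lx1 lyp myn in simp)
  moreover have "a \<noteq> c" by (rule neq) (use F1 es1 es2 fs1 fs2 lx1 lyp myn in simp)
  moreover have "a \<noteq> d" by (rule neq) (use F1 es1 es2 fs1 fs2 lx1 lyp myn in simp)
  moreover have "a \<noteq> x0" by (rule neq) (use F1 es1 es2 fs1 fs2 lx1 lyp myn in simp)
  moreover have "a \<noteq> y" by (rule neq) (use F1 es1 es2 fs1 fs2 lx1 lyp myn in simp)
  moreover have "b \<noteq> c" by (rule neq) (use F1 es1 es2 fs1 fs2 lx1 lyp myn in simp)
  moreover have "b \<noteq> d" by (rule neq) (use F1 es1 es2 fs1 fs2 lx1 lyp myn in simp)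
  moreover have "b \<noteq> x0" by (rule neq) (use F1 es1 es2 fs1 fs2 lx1 lyp myn in simp)
  moreover have "b \<noteq> y" by (rule neq) (use F1 es1 es2 fs1 fs2 lx1 lyp myn in simp)
  moreover have "c \<noteq> d" by (rule neq) (use F1 es1 es2 fs1 fs2 lx1 lyp myn in simp)
  moreover have "c \<noteq> x0" by (rule neq) (use F1 es1 es2 fs1 fs2 lx1 lyp myn in simp)
  moreover have "c \<noteq> y" by (rule neq) (use F1 es1 es2 fs1 fs2 lx1 lyp myn in simp)
  moreover have "d \<noteq> x0" by (rule neq) (use F1 es1 es2 fs1 fs2 lx1 lyp myn in simp)
  moreover have "d \<noteq> y" by (rule neq) (use F1 es1 es2 fs1 fs2 lx1 lyp myn in simp)
  ultimately have card6: "card {a, b, c, d, x0, y} = 6" by simp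
  have "{a, b, c, d, x0, y} \<subseteq> \<Gamma>" using inG yG by auto
  then have "csc_position {a, b, c, d, x0, y}" using csc card6 by auto
  then obtain K where cb: "convex_body K" and cs: "centrally_symmetric K"
    and SK: "{a, b, c, d, x0, y} \<subseteq> frontier K"
    unfolding csc_position_def by blast
  have Kcl: "frontier K \<subseteq> K" using cb unfolding convex_body_def
    by (simp add: compact_imp_closed frontier_subset_closed)
  obtain p0 where p0: "\<forall>x\<in>K. 2 *\<^sub>R p0 - x \<in> K" using cs unfolding centrally_symmetric_def by blast
  have inK: "a \<in> K" "b \<in> K" "c \<in> K" "d \<in> K" "x0 \<in> K" "y \<in> K" using SK Kcl by auto
  have inK2: "2 *\<^sub>R p0 - a \<in> K" "2 *\<^sub>R p0 - b \<in> K" "2 *\<^sub>R p0 - c \<in> K"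
    "2 *\<^sub>R p0 - d \<in> K" "2 *\<^sub>R p0 - x0 \<in> K" "2 *\<^sub>R p0 - y \<in> K" using inK p0 by auto
  have inF: "a \<in> frontier K" "b \<in> frontier K" "c \<in> frontier K" "d \<in> frontier K" using SK by auto
  obtain va where va: "va \<noteq> 0" "\<forall>k\<in>K. va \<bullet> k \<le> va \<bullet> a" using frontier_support[OF cb inF(1)] by blast
  obtain vb where vb: "vb \<noteq> 0" "\<forall>k\<in>K. vb \<bullet> k \<le> vb \<bullet> b" using frontier_support[OF cb inF(2)] by blast
  obtain vc where vc: "vc \<noteq> 0" "\<forall>k\<in>K. vc \<bullet> k \<le> vc \<bullet> c" using frontier_support[OF cb inF(3)] by blast
  obtain vd where vd: "vd \<noteq> 0" "\<forall>k\<in>K. vd \<bullet> k \<le> vd \<bullet> d" using frontier_support[OF cb inF(4)] by blast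
  define g where "g = 2 *\<^sub>R p0 - a - c"
  define al where "al = es \<bullet> g"
  define be where "be = fs \<bullet> g"
  have cdef: "c = b + d - a" using par by (simp add: algebra_simps)
  have cg: "es \<bullet> g = al" "fs \<bullet> g = be" using al_def be_def by auto
  note co = ese cc cx cy cg
  have I0: "(1) * (va \<bullet> e) + (0) * (va \<bullet> f) \<le> 0"
  proof (rule sup_ineq2[OF va(2) _ _ _ _ expand])
    show "b \<in> K" using inK by simp
    show "b - a = e" unfolding e_def f_def g_def cA_def xA_def yA_def using cdef by (simp add: algebra_simps)
    show "es \<bullet> (e) = 1" using co by (simp add: inner_add_right inner_diff_right inner_minus_right)
    show "fs \<bullet> (e) = 0" using co by (simp add: inner_add_right inner_diff_right inner_minus_right)
  qed
  have I1: "(0) * (va \<bullet> e) + (1) * (va \<bullet> f) \<le> 0"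
  proof (rule sup_ineq2[OF va(2) _ _ _ _ expand])
    show "d \<in> K" using inK by simp
    show "d - a = f" unfolding e_def f_def g_def cA_def xA_def yA_def using cdef by (simp add: algebra_simps)
    show "es \<bullet> (f) = 0" using co by (simp add: inner_add_right inner_diff_right inner_minus_right)
    show "fs \<bullet> (f) = 1" using co by (simp add: inner_add_right inner_diff_right inner_minus_right)
  qed
  have I2: "(al) * (va \<bullet> e) + (be) * (va \<bullet> f) \<le> 0"
  proof (rule sup_ineq2[OF va(2) _ _ _ _ expand])
    show "2 *\<^sub>R p0 - c \<in> K" using inK2 by simp
    show "2 *\<^sub>R p0 - c - a = g" unfolding e_def f_def g_def cA_def xA_def yA_def using cdef by (simp add: algebra_simps)
    show "es \<bullet> (g) = al" using co by (simp add: inner_add_right inner_diff_right inner_minus_right)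
    show "fs \<bullet> (g) = be" using co by (simp add: inner_add_right inner_diff_right inner_minus_right)
  qed
  have I3: "(al + 1 - lx) * (va \<bullet> e) + (be + 1 - mx) * (va \<bullet> f) \<le> 0"
  proof (rule sup_ineq2[OF va(2) _ _ _ _ expand])
    show "2 *\<^sub>R p0 - x0 \<in> K" using inK2 by simp
    show "2 *\<^sub>R p0 - x0 - a = g + cA - xA" unfolding e_def f_def g_def cA_def xA_def yA_def using cdef by (simp add: algebra_simps)
    show "es \<bullet> (g + cA - xA) = al + 1 - lx" using co by (simp add: inner_add_right inner_diff_right inner_minus_right)
    show "fs \<bullet> (g + cA - xA) = be + 1 - mx" using co by (simp add: inner_add_right inner_diff_right inner_minus_right)
  qed
  have I4: "(ly) * (va \<bullet> e) + (my) * (va \<bullet> f) \<le> 0"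
  proof (rule sup_ineq2[OF va(2) _ _ _ _ expand])
    show "y \<in> K" using inK by simp
    show "y - a = yA" unfolding e_def f_def g_def cA_def xA_def yA_def using cdef by (simp add: algebra_simps)
    show "es \<bullet> (yA) = ly" using co by (simp add: inner_add_right inner_diff_right inner_minus_right)
    show "fs \<bullet> (yA) = my" using co by (simp add: inner_add_right inner_diff_right inner_minus_right)
  qed
  have I5: "(-1) * (vb \<bullet> e) + (0) * (vb \<bullet> f) \<le> 0"
  proof (rule sup_ineq2[OF vb(2) _ _ _ _ expand])
    show "a \<in> K" using inK by simp
    show "a - b = - e" unfolding e_def f_def g_def cA_def xA_def yA_def using cdef by (simp add: algebra_simps)
    show "es \<bullet> (- e) = -1" using co by (simp add: inner_add_right inner_diff_right inner_minus_right)
    show "fs \<bullet> (- e) = 0" using co by (simp add: inner_add_right inner_diff_right inner_minus_right)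
  qed
  have I6: "(0) * (vb \<bullet> e) + (1) * (vb \<bullet> f) \<le> 0"
  proof (rule sup_ineq2[OF vb(2) _ _ _ _ expand])
    show "c \<in> K" using inK by simp
    show "c - b = f" unfolding e_def f_def g_def cA_def xA_def yA_def using cdef by (simp add: algebra_simps)
    show "es \<bullet> (f) = 0" using co by (simp add: inner_add_right inner_diff_right inner_minus_right)
    show "fs \<bullet> (f) = 1" using co by (simp add: inner_add_right inner_diff_right inner_minus_right)
  qed
  have I7: "(al) * (vb \<bullet> e) + (be) * (vb \<bullet> f) \<le> 0"
  proof (rule sup_ineq2[OF vb(2) _ _ _ _ expand])
    show "2 *\<^sub>R p0 - d \<in> K" using inK2 by simp
    show "2 *\<^sub>R p0 - d - b = g" unfolding e_def f_def g_def cA_def xA_def yA_def using cdef by (simp add: algebra_simps)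
    show "es \<bullet> (g) = al" using co by (simp add: inner_add_right inner_diff_right inner_minus_right)
    show "fs \<bullet> (g) = be" using co by (simp add: inner_add_right inner_diff_right inner_minus_right)
  qed
  have I8: "(0) * (vc \<bullet> e) + (-1) * (vc \<bullet> f) \<le> 0"
  proof (rule sup_ineq2[OF vc(2) _ _ _ _ expand])
    show "b \<in> K" using inK by simp
    show "b - c = - f" unfolding e_def f_def g_def cA_def xA_def yA_def using cdef by (simp add: algebra_simps)
    show "es \<bullet> (- f) = 0" using co by (simp add: inner_add_right inner_diff_right inner_minus_right)
    show "fs \<bullet> (- f) = -1" using co by (simp add: inner_add_right inner_diff_right inner_minus_right)
  qed
  have I9: "(-1) * (vc \<bullet> e) + (0) * (vc \<bullet> f) \<le> 0"
  proof (rule sup_ineq2[OF vc(2) _ _ _ _ expand])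
    show "d \<in> K" using inK by simp
    show "d - c = - e" unfolding e_def f_def g_def cA_def xA_def yA_def using cdef by (simp add: algebra_simps)
    show "es \<bullet> (- e) = -1" using co by (simp add: inner_add_right inner_diff_right inner_minus_right)
    show "fs \<bullet> (- e) = 0" using co by (simp add: inner_add_right inner_diff_right inner_minus_right)
  qed
  have I10: "(al) * (vc \<bullet> e) + (be) * (vc \<bullet> f) \<le> 0"
  proof (rule sup_ineq2[OF vc(2) _ _ _ _ expand])
    show "2 *\<^sub>R p0 - a \<in> K" using inK2 by simp
    show "2 *\<^sub>R p0 - a - c = g" unfolding e_def f_def g_def cA_def xA_def yA_def using cdef by (simp add: algebra_simps)
    show "es \<bullet> (g) = al" using co by (simp add: inner_add_right inner_diff_right inner_minus_right)
    show "fs \<bullet> (g) = be" using co by (simp add: inner_add_right inner_diff_right inner_minus_right)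
  qed
  have I11: "(lx - 1) * (vc \<bullet> e) + (mx - 1) * (vc \<bullet> f) \<le> 0"
  proof (rule sup_ineq2[OF vc(2) _ _ _ _ expand])
    show "x0 \<in> K" using inK by simp
    show "x0 - c = xA - cA" unfolding e_def f_def g_def cA_def xA_def yA_def using cdef by (simp add: algebra_simps)
    show "es \<bullet> (xA - cA) = lx - 1" using co by (simp add: inner_add_right inner_diff_right inner_minus_right)
    show "fs \<bullet> (xA - cA) = mx - 1" using co by (simp add: inner_add_right inner_diff_right inner_minus_right)
  qed
  have I12: "(al - ly) * (vc \<bullet> e) + (be - my) * (vc \<bullet> f) \<le> 0"
  proof (rule sup_ineq2[OF vc(2) _ _ _ _ expand])
    show "2 *\<^sub>R p0 - y \<in> K" using inK2 by simp
    show "2 *\<^sub>R p0 - y - c = g - yA" unfolding e_def f_def g_def cA_def xA_def yA_def using cdef by (simp add: algebra_simps)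
    show "es \<bullet> (g - yA) = al - ly" using co by (simp add: inner_add_right inner_diff_right inner_minus_right)
    show "fs \<bullet> (g - yA) = be - my" using co by (simp add: inner_add_right inner_diff_right inner_minus_right)
  qed
  have I13: "(0) * (vd \<bullet> e) + (-1) * (vd \<bullet> f) \<le> 0"
  proof (rule sup_ineq2[OF vd(2) _ _ _ _ expand])
    show "a \<in> K" using inK by simp
    show "a - d = - f" unfolding e_def f_def g_def cA_def xA_def yA_def using cdef by (simp add: algebra_simps)
    show "es \<bullet> (- f) = 0" using co by (simp add: inner_add_right inner_diff_right inner_minus_right)
    show "fs \<bullet> (- f) = -1" using co by (simp add: inner_add_right inner_diff_right inner_minus_right)
  qed
  have I14: "(1) * (vd \<bullet> e) + (0) * (vd \<bullet> f) \<le> 0"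
  proof (rule sup_ineq2[OF vd(2) _ _ _ _ expand])
    show "c \<in> K" using inK by simp
    show "c - d = e" unfolding e_def f_def g_def cA_def xA_def yA_def using cdef by (simp add: algebra_simps)
    show "es \<bullet> (e) = 1" using co by (simp add: inner_add_right inner_diff_right inner_minus_right)
    show "fs \<bullet> (e) = 0" using co by (simp add: inner_add_right inner_diff_right inner_minus_right)
  qed
  have I15: "(al) * (vd \<bullet> e) + (be) * (vd \<bullet> f) \<le> 0"
  proof (rule sup_ineq2[OF vd(2) _ _ _ _ expand])
    show "2 *\<^sub>R p0 - b \<in> K" using inK2 by simp
    show "2 *\<^sub>R p0 - b - d = g" unfolding e_def f_def g_def cA_def xA_def yA_def using cdef by (simp add: algebra_simps)
    show "es \<bullet> (g) = al" using co by (simp add: inner_add_right inner_diff_right inner_minus_right)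
    show "fs \<bullet> (g) = be" using co by (simp add: inner_add_right inner_diff_right inner_minus_right)
  qed
  show False
  proof (rule core_arith[OF lx1 lyp myn y3])
    show "va \<bullet> e \<noteq> 0 \<or> va \<bullet> f \<noteq> 0" by (rule nz_coord[OF va(1) expand])
    show "vb \<bullet> e \<noteq> 0 \<or> vb \<bullet> f \<noteq> 0" by (rule nz_coord[OF vb(1) expand])
    show "vc \<bullet> e \<noteq> 0 \<or> vc \<bullet> f \<noteq> 0" by (rule nz_coord[OF vc(1) expand])
    show "vd \<bullet> e \<noteq> 0 \<or> vd \<bullet> f \<noteq> 0" by (rule nz_coord[OF vd(1) expand])
  qed (use I0 I1 I2 I3 I4 I5 I6 I7 I8 I9 I10 I11 I12 I13 I14 I15 in \<open>simp_all add: algebra_simps\<close>)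
qed

theorem mainTheorem9:
  fixes \<Gamma> :: "pt set" and a b c d :: pt and l :: "pt set"
  assumes "simple_closed_curve \<Gamma>"
    and "\<forall>S. S \<subseteq> \<Gamma> \<and> finite S \<and> card S = 6 \<longrightarrow> csc_position S"
    and "smooth_point_tangent \<Gamma> a l"
    and "b \<in> \<Gamma>" "c \<in> \<Gamma>" "d \<in> \<Gamma>"
    and "a + c = b + d"
    and "\<not> collinear {a, b, d}"
    and "b \<notin> l" "d \<notin> l"
  shows "supporting_line \<Gamma> ((\<lambda>x. x + (c - a)) ` l)"
proof -
  note csc = assms(2)
  have aG: "a \<in> \<Gamma>" and al: "a \<in> l" and sup: "supporting_line \<Gamma> l"
    and uniq: "\<forall>L'. supporting_line \<Gamma> L' \<and> a \<in> L' \<longrightarrow> L' = l"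
    using assms(3) unfolding smooth_point_tangent_def by auto
  obtain u t where u0: "u \<noteq> 0" and ldef: "l = {x. u \<bullet> x = t}" and below: "\<forall>x\<in>\<Gamma>. u \<bullet> x \<le> t"
  proof -
    obtain u0 t0 where h: "u0 \<noteq> 0" "l = {x. u0 \<bullet> x = t0}"
      "(\<forall>x\<in>\<Gamma>. u0 \<bullet> x \<le> t0) \<or> (\<forall>x\<in>\<Gamma>. u0 \<bullet> x \<ge> t0)"
      using sup unfolding supporting_line_def by blast
    show ?thesis
    proof (cases "\<forall>x\<in>\<Gamma>. u0 \<bullet> x \<le> t0")
      case True then show ?thesis using that h by blast
    next
      case False
      then have "\<forall>x\<in>\<Gamma>. (- u0) \<bullet> x \<le> - t0" using h(3) by auto
      moreover have "l = {x. (- u0) \<bullet> x = - t0}" using h(2) by auto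
      moreover have "- u0 \<noteq> 0" using h(1) by simp
      ultimately show ?thesis using that by blast
    qed
  qed
  have smooth: "{x. n \<bullet> x = n \<bullet> a} = l" if "n \<noteq> 0" "\<forall>x\<in>\<Gamma>. n \<bullet> x \<le> n \<bullet> a" for n
  proof -
    have "supporting_line \<Gamma> {x. n \<bullet> x = n \<bullet> a}"
      unfolding supporting_line_def using that aG by blast
    then show ?thesis using uniq by auto
  qed
  have ua: "u \<bullet> a = t" using al ldef by simp
  have ub: "u \<bullet> (b - a) < 0" using below assms(4,9) ldef ua
    by (auto simp: inner_diff_right order_le_less)
  have ud: "u \<bullet> (d - a) < 0" using below assms(6,10) ldef ua
    by (auto simp: inner_diff_right order_le_less)
  have "collinear {b, a, d} \<longleftrightarrow> collinear {0, b - a, d - a}" by (rule collinear_3) simp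
  moreover have "{b, a, d} = {a, b, d}" by auto
  ultimately have nc: "\<not> collinear {0, b - a, d - a}" using assms(8) by simp
  obtain es fs where es1: "es \<bullet> (b - a) = 1" and es2: "es \<bullet> (d - a) = 0"
    and fs1: "fs \<bullet> (b - a) = 0" and fs2: "fs \<bullet> (d - a) = 1"
    and dec: "\<And>w. w = (es \<bullet> w) *\<^sub>R (b - a) + (fs \<bullet> w) *\<^sub>R (d - a)"
    using dual_basis[OF nc] by metis
  have dec': "w = (fs \<bullet> w) *\<^sub>R (d - a) + (es \<bullet> w) *\<^sub>R (b - a)" for w
    using dec[of w] by (simp add: add.commute)
  have par': "a + c = d + b" using assms(7) by (simp add: add.commute)
  have geq: "\<forall>x\<in>\<Gamma>. u \<bullet> x \<ge> u \<bullet> c"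
  proof (rule ccontr)
    assume "\<not> ?thesis"
    then obtain x0 where x0G: "x0 \<in> \<Gamma>" and x0c: "u \<bullet> x0 < u \<bullet> c" by auto
    define lx where "lx = es \<bullet> (x0 - a)"
    define mx where "mx = fs \<bullet> (x0 - a)"
    have "u \<bullet> (x0 - a) = u \<bullet> (lx *\<^sub>R (b - a) + mx *\<^sub>R (d - a))"
      using dec[of "x0 - a"] lx_def mx_def by metis
    then have ex: "u \<bullet> (x0 - a) = lx * (u \<bullet> (b - a)) + mx * (u \<bullet> (d - a))"
      by (simp add: inner_add_right)
    have ca0: "c - a = (b - a) + (d - a)" using assms(7) by (simp add: algebra_simps)
    have ec: "u \<bullet> (c - a) = u \<bullet> (b - a) + u \<bullet> (d - a)" unfolding ca0 by (simp only: inner_add_right)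
    have lt: "u \<bullet> (x0 - a) < u \<bullet> (c - a)" using x0c by (simp add: inner_diff_right)
    have "lx > 1 \<or> mx > 1"
    proof (rule ccontr)
      assume "\<not> ?thesis"
      then have "lx \<le> 1" "mx \<le> 1" by auto
      then have "lx * (u \<bullet> (b - a)) \<ge> 1 * (u \<bullet> (b - a))" "mx * (u \<bullet> (d - a)) \<ge> 1 * (u \<bullet> (d - a))"
        using ub ud by (auto intro!: mult_right_mono_neg)
      then show False using ex ec lt by simp
    qed
    then show False
    proof
      assume "lx > 1"
      show False
        by (rule core_geom[OF csc smooth ldef ua below aG assms(4,5,6) x0G assms(7) ub ud es1 es2 fs1 fs2 dec])
          (use \<open>lx > 1\<close> lx_def x0c in auto)
    next
      assume "mx > 1"
      show False
        by (rule core_geom[OF csc smooth ldef ua below aG assms(6,5,4) x0G par' ud ub fs2 fs1 es2 es1 dec'])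
          (use \<open>mx > 1\<close> mx_def x0c in auto)
    qed
  qed
  have img: "(\<lambda>x. x + (c - a)) ` l = {x. u \<bullet> x = u \<bullet> c}"
  proof
    show "(\<lambda>x. x + (c - a)) ` l \<subseteq> {x. u \<bullet> x = u \<bullet> c}"
      using ldef ua by (auto simp: inner_add_right inner_diff_right)
    show "{x. u \<bullet> x = u \<bullet> c} \<subseteq> (\<lambda>x. x + (c - a)) ` l"
    proof
      fix x assume "x \<in> {x. u \<bullet> x = u \<bullet> c}"
      then have "x - (c - a) \<in> l" using ldef ua by (simp add: inner_diff_right)
      then show "x \<in> (\<lambda>x. x + (c - a)) ` l" by (rule rev_image_eqI) simp
    qed
  qed
  show ?thesis unfolding img supporting_line_def
    using u0 assms(5) geq by blast
qed

end
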